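(* Let $\Bbbk$ be a unital ring and $n,r$ positive integers. If $r\ge n$ then $\Phi_{n,r}:\Bbbk W_n\to\operatorname{End}_\Bbbk(\mathbf V^{\otimes r})$ is faithful. If $r+1\ge n$ then $\Phi_{n,r+1/2}:\Bbbk W_{n-1}\to\operatorname{End}_\Bbbk(\mathbf V^{\otimes r}\otimes\mathbf v_n)$ is faithful.
   Context: $\mathbf V$ is a free $\Bbbk$-module with basis $\mathbf v_1,\dots,\mathbf v_n$. $W_n$ is the symmetric group on $\{1,\dots,n\}$ acting on $\mathbf V^{\otimes r}$ by $w(\mathbf v_{j_1}\otimes\cdots\otimes\mathbf v_{j_r})=\mathbf v_{w(j_1)}\otimes\cdots\otimes\mathbf v_{w(j_r)}$ extended linearly; $\Phi_{n,r}$ is the resulting representation. $W_{n-1}=\{w\in W_n:w(n)=n\}$ preserves $\mathbf V^{\otimes r}\otimes\mathbf v_n\subset\mathbf V^{\otimes(r+1)}$, and $\Phi_{n,r+1/2}$ is the resulting representation. *)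

theory Defs
  imports "HOL-Combinatorics.Permutations"
begin

text \<open>W_n: permutations of {1..n}; W_{n-1}: those fixing n.\<close>
definition Wn :: "nat \<Rightarrow> (nat \<Rightarrow> nat) set" where
  "Wn n = {w. w permutes {1..n}}"

definition Wn_fix :: "nat \<Rightarrow> (nat \<Rightarrow> nat) set" where
  "Wn_fix n = {w \<in> Wn n. w n = n}"

text \<open>Index words of the basis tensors v_{j_1} (x) ... (x) v_{j_r} of V^{(x) r}.\<close>
definition words :: "nat \<Rightarrow> nat \<Rightarrow> nat list set" where
  "words n r = {u. length u = r \<and> set u \<subseteq> {1..n}}"

text \<open>Index words of the basis of V^{(x) r} (x) v_n inside V^{(x)(r+1)}.\<close>
definition words_half :: "nat \<Rightarrow> nat \<Rightarrow> nat list set" where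
  "words_half n r = {u @ [n] | u. u \<in> words n r}"

definition group_alg :: "(nat \<Rightarrow> nat) set \<Rightarrow> ((nat \<Rightarrow> nat) \<Rightarrow> 'k::ring_1) set" where
  "group_alg G = {a. \<forall>w. w \<notin> G \<longrightarrow> a w = 0}"

text \<open>Free k-module with (finite) basis indexed by B, elements as coefficient functions.\<close>
definition tensors :: "nat list set \<Rightarrow> (nat list \<Rightarrow> 'k::ring_1) set" where
  "tensors B = {x. \<forall>u. u \<notin> B \<longrightarrow> x u = 0}"

text \<open>Linear extension of w(v_u) = v_{w(u)} (letterwise).\<close>
definition perm_act :: "nat list set \<Rightarrow> (nat \<Rightarrow> nat) \<Rightarrow> (nat list \<Rightarrow> 'k::ring_1) \<Rightarrow> (nat list \<Rightarrow> 'k)" where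
  "perm_act B w x = (\<lambda>u'. \<Sum>u\<in>{u \<in> B. map w u = u'}. x u)"

definition rep :: "(nat \<Rightarrow> nat) set \<Rightarrow> nat list set \<Rightarrow> ((nat \<Rightarrow> nat) \<Rightarrow> 'k::ring_1)
    \<Rightarrow> (nat list \<Rightarrow> 'k) \<Rightarrow> (nat list \<Rightarrow> 'k)" where
  "rep G B a = (\<lambda>x\<in>tensors B. (\<lambda>u'. \<Sum>w\<in>G. a w * perm_act B w x u'))"

definition faithful_rep :: "(nat \<Rightarrow> nat) set \<Rightarrow> nat list set \<Rightarrow> 'k::ring_1 itself \<Rightarrow> bool" where
  "faithful_rep G B _ = inj_on (rep G B :: ((nat \<Rightarrow> nat) \<Rightarrow> 'k) \<Rightarrow> _) (group_alg G)"

end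

theory Submission
  imports Defs
begin

lemma perm_act_delta:
  assumes "inj w" "u \<in> B"
  shows "perm_act B w (\<lambda>v. if v = u then (1::'k::ring_1) else 0) u' = (if map w u = u' then 1 else 0)"
proof (cases "map w u = u'")
  case True
  have injm: "inj (map w)" using assms(1) by (simp add: inj_mapI)
  have "{v \<in> B. map w v = u'} = {u}"
    using True assms(2) injm by (auto dest: injD)
  then show ?thesis using True by (simp add: perm_act_def)
next
  case False
  show ?thesis using False unfolding perm_act_def
    by (auto intro!: sum.neutral)
qed

lemma key:
  assumes fin: "finite G" and inj: "\<forall>w\<in>G. inj w" and u: "u \<in> B"
    and det: "\<forall>w1\<in>G. \<forall>w2\<in>G. map w1 u = map w2 u \<longrightarrow> w1 = w2"
  shows "inj_on (rep G B :: ((nat \<Rightarrow> nat) \<Rightarrow> 'k::ring_1) \<Rightarrow> _) (group_alg G)"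
proof (rule inj_onI)
  fix a b :: "(nat \<Rightarrow> nat) \<Rightarrow> 'k"
  assume a: "a \<in> group_alg G" and b: "b \<in> group_alg G" and eq: "rep G B a = rep G B b"
  define x where "x = (\<lambda>v. if v = u then (1::'k) else 0)"
  have xt: "x \<in> tensors B" using u by (auto simp: x_def tensors_def)
  have ev: "rep G B c x (map w0 u) = c w0" if "w0 \<in> G" for w0 and c :: "(nat \<Rightarrow> nat) \<Rightarrow> 'k"
  proof -
    have "rep G B c x (map w0 u) = (\<Sum>w\<in>G. c w * (if map w u = map w0 u then 1 else 0))"
      using xt inj u by (simp add: rep_def x_def perm_act_delta)
    also have "\<dots> = (\<Sum>w\<in>G. if w = w0 then c w else 0)"
      using det that by (intro sum.cong) auto
    also have "\<dots> = c w0" using fin that by simp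
    finally show ?thesis .
  qed
  show "a = b"
  proof
    fix w0
    show "a w0 = b w0"
    proof (cases "w0 \<in> G")
      case True
      then show ?thesis using ev[OF True, of a] ev[OF True, of b] eq by simp
    next
      case False
      then show ?thesis using a b by (simp add: group_alg_def)
    qed
  qed
qed

lemma det_perm:
  assumes "w1 permutes {1..n}" "w2 permutes {1..n}" "{1..n} \<subseteq> set u" "map w1 u = map w2 u"
  shows "w1 = w2"
proof
  fix x
  show "w1 x = w2 x"
  proof (cases "x \<in> {1..n}")
    case True
    then show ?thesis using assms(3,4) by (auto simp: map_eq_conv)
  next
    case False
    then show ?thesis using assms(1,2) by (simp add: permutes_not_in)
  qed
qed

lemma finWn: "finite (Wn n)"
  unfolding Wn_def by (rule finite_permutations) simp

lemma injWn: "\<forall>w\<in>Wn n. inj w"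
  unfolding Wn_def by (auto simp: permutes_inj)

lemma setu:
  assumes "0 < n" "n \<le> r + 1"
  shows "{1..<n} \<subseteq> set ([1..<n] @ replicate (r + 1 - n) n)"
    "length ([1..<n] @ replicate (r + 1 - n) n) = r"
    "set ([1..<n] @ replicate (r + 1 - n) n) \<subseteq> {1..n}"
  using assms by auto

theorem lemma4p1:
  fixes n r :: nat
  assumes "0 < n" and "0 < r"
  shows "(r \<ge> n \<longrightarrow> faithful_rep (Wn n) (words n r) TYPE('k::ring_1))
       \<and> (r + 1 \<ge> n \<longrightarrow> faithful_rep (Wn_fix n) (words_half n r) TYPE('k::ring_1))"
proof (intro conjI impI)
  define u where "u = [1..<n] @ replicate (r + 1 - n) n"
  assume rn: "r \<ge> n"
  have uw: "u \<in> words n r" using setu[of n r] assms rn by (simp add: u_def words_def)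
  have su: "{1..n} \<subseteq> set u"
  proof
    fix x assume "x \<in> {1..n}"
    then show "x \<in> set u" using rn assms by (cases "x = n") (auto simp: u_def)
  qed
  show "faithful_rep (Wn n) (words n r) TYPE('k::ring_1)"
    unfolding faithful_rep_def
    by (rule key[OF finWn injWn uw]) (auto simp: Wn_def intro: det_perm[OF _ _ su])
next
  define u where "u = [1..<n] @ replicate (r + 1 - n) n @ [n]"
  assume rn: "r + 1 \<ge> n"
  have uw: "u \<in> words_half n r"
    using setu[of n r] assms rn unfolding u_def words_half_def words_def
    by (intro CollectI exI[of _ "[1..<n] @ replicate (r + 1 - n) n"]) auto
  have su: "{1..n} \<subseteq> set u"
  proof
    fix x assume "x \<in> {1..n}"
    then show "x \<in> set u" using rn assms by (cases "x = n") (auto simp: u_def)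
  qed
  have sub: "Wn_fix n \<subseteq> Wn n" by (auto simp: Wn_fix_def)
  show "faithful_rep (Wn_fix n) (words_half n r) TYPE('k::ring_1)"
    unfolding faithful_rep_def
    by (rule key[OF finite_subset[OF sub finWn] _ uw])
      (use injWn sub in \<open>auto simp: Wn_fix_def Wn_def intro: det_perm[OF _ _ su]\<close>)
qed

end
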